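(* For $n\ge 0$ and $k\ge0$, let $LO_k(n)$ be the number of saturated 2-regular simple stacks on $[n]$ with exactly $\lfloor (n-1)/2\rfloor-k$ arcs. Then for every $n\ge 3$, \[ LO_1(n)=\begin{cases} \dfrac{(n-1) (n-3) }{192}(n^{2}+8 n+31), & n \text{ odd},\\[6pt] \dfrac{(n-2) (n-4) }{9216}(n^{4}+12 n^{3}+68 n^{2}-288 n-2304), & n\text{ even}, \end{cases} \] and \[ LO_2(n)=\begin{cases} \dfrac{(n-3)(n-5)(n-7)}{737280}\left(n^{5}+23 n^{4}+278 n^{3}+634 n^{2}-9879 n-52497\right), & n\text{ odd},\\[6pt] \dfrac{(n-4)(n-6)(n-8)}{88473600}\big(n^{7}+28 n^{6}+400 n^{5}-560 n^{4}-56336 n^{3}-320768 n^{2}\\ \qquad\qquad+1555200 n+13363200\big), & n\text{ even}. \end{cases} \]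
   Context: A 2-regular simple stack on $[n]$ is a simple graph on vertices $1,\dots,n$ (drawn on a line) whose arcs $(i,j)$, $i<j$, satisfy $j-i\ge 2$, no two arcs $(i,j),(k,l)$ satisfy $i<k<j<l$ (noncrossing), and every vertex has degree at most 1. It is saturated if no arc can be added keeping these properties. The maximum number of arcs of a 2-regular simple stack on $[n]$ is $\lfloor (n-1)/2\rfloor$; a $k$-saturated stack is a saturated one with exactly $k$ fewer arcs than this maximum, so $LO_k(n)$ counts $k$-saturated 2-regular simple stacks on $[n]$. *)

theory Defs
  imports Complex_Main
begin

definition stack2 :: "nat \<Rightarrow> (nat \<times> nat) set \<Rightarrow> bool" where
  "stack2 n A \<longleftrightarrow>
     A \<subseteq> {(i,j). 1 \<le> i \<and> i < j \<and> j \<le> n \<and> i + 2 \<le> j} \<and>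
     (\<forall>(i,j)\<in>A. \<forall>(k,l)\<in>A. \<not> (i < k \<and> k < j \<and> j < l)) \<and>
     (\<forall>(i,j)\<in>A. \<forall>(k,l)\<in>A. (i,j) \<noteq> (k,l) \<longrightarrow> {i,j} \<inter> {k,l} = {})"

definition saturated2 :: "nat \<Rightarrow> (nat \<times> nat) set \<Rightarrow> bool" where
  "saturated2 n A \<longleftrightarrow> stack2 n A \<and> (\<forall>e. e \<notin> A \<longrightarrow> \<not> stack2 n (insert e A))"

definition LO :: "nat \<Rightarrow> nat \<Rightarrow> nat" where
  "LO k n = card {A. saturated2 n A \<and> card A + k = (n - 1) div 2}"

end

theory Submission
  imports Defs "HOL-Computational_Algebra.Formal_Power_Series"
begin

definition stk :: "nat \<Rightarrow> nat \<Rightarrow> (nat \<times> nat) set \<Rightarrow> bool" where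
  "stk lo hi A \<longleftrightarrow> (\<forall>(i,j)\<in>A. lo \<le> i \<and> i + 2 \<le> j \<and> j < hi) \<and>
     (\<forall>(i,j)\<in>A. \<forall>(k,l)\<in>A. \<not> (i < k \<and> k < j \<and> j < l)) \<and>
     (\<forall>(i,j)\<in>A. \<forall>(k,l)\<in>A. (i,j) \<noteq> (k,l) \<longrightarrow> i \<noteq> k \<and> i \<noteq> l \<and> j \<noteq> k \<and> j \<noteq> l)"

definition mt :: "(nat \<times> nat) set \<Rightarrow> nat \<Rightarrow> bool" where
  "mt A v \<longleftrightarrow> (\<exists>(i,j)\<in>A. v = i \<or> v = j)"

definition cov :: "(nat \<times> nat) set \<Rightarrow> nat \<Rightarrow> bool" where
  "cov A v \<longleftrightarrow> (\<exists>(k,l)\<in>A. k < v \<and> v < l)"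

definition sat :: "nat \<Rightarrow> nat \<Rightarrow> (nat \<times> nat) set \<Rightarrow> bool" where
  "sat lo hi A \<longleftrightarrow> stk lo hi A \<and> (\<forall>i j. lo \<le> i \<longrightarrow> i + 2 \<le> j \<longrightarrow> j < hi \<longrightarrow> \<not> mt A i \<longrightarrow> \<not> mt A j \<longrightarrow>
      (\<exists>(k,l)\<in>A. (i < k \<and> k < j \<and> j < l) \<or> (k < i \<and> i < l \<and> l < j)))"

definition oe :: "nat \<Rightarrow> nat \<Rightarrow> (nat \<times> nat) set \<Rightarrow> bool" where
  "oe lo hi A \<longleftrightarrow> (\<forall>v. lo \<le> v \<longrightarrow> v < hi \<longrightarrow> \<not> mt A v \<longrightarrow> cov A v)"

lemma stack2_stk: "stack2 n A \<longleftrightarrow> stk 1 (Suc n) A"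
proof -
  have "(A \<subseteq> {(i,j). 1 \<le> i \<and> i < j \<and> j \<le> n \<and> i + 2 \<le> j}) \<longleftrightarrow>
        (\<forall>(i,j)\<in>A. 1 \<le> i \<and> i + 2 \<le> j \<and> j < Suc n)" by fastforce
  moreover have "(\<forall>(i,j)\<in>A. \<forall>(k,l)\<in>A. (i,j) \<noteq> (k,l) \<longrightarrow> {i,j} \<inter> {k,l} = {}) \<longleftrightarrow>
     (\<forall>(i,j)\<in>A. \<forall>(k,l)\<in>A. (i,j) \<noteq> (k,l) \<longrightarrow> i \<noteq> k \<and> i \<noteq> l \<and> j \<noteq> k \<and> j \<noteq> l)"
    by auto
  ultimately show ?thesis unfolding stack2_def stk_def by simp
qed

lemma stk_insert:
  assumes "(i,j) \<notin> A"
  shows "stk lo hi (insert (i,j) A) \<longleftrightarrow> stk lo hi A \<and> lo \<le> i \<and> i + 2 \<le> j \<and> j < hi \<and>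
     (\<forall>(k,l)\<in>A. \<not> (i < k \<and> k < j \<and> j < l) \<and> \<not> (k < i \<and> i < l \<and> l < j)) \<and>
     (\<forall>(k,l)\<in>A. i \<noteq> k \<and> i \<noteq> l \<and> j \<noteq> k \<and> j \<noteq> l)"
  using assms unfolding stk_def by (auto; blast)

lemma saturated2_sat: "saturated2 n A \<longleftrightarrow> sat 1 (Suc n) A"
proof
  assume H: "saturated2 n A"
  then have S: "stk 1 (Suc n) A" by (simp add: saturated2_def stack2_stk)
  show "sat 1 (Suc n) A" unfolding sat_def
  proof (intro conjI S allI impI)
    fix i j assume a: "1 \<le> i" "i + 2 \<le> j" "j < Suc n" "\<not> mt A i" "\<not> mt A j"
    have nin: "(i,j) \<notin> A" using a(4) by (auto simp: mt_def)
    hence "\<not> stk 1 (Suc n) (insert (i,j) A)" using H by (simp add: saturated2_def stack2_stk)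
    moreover have "\<forall>(k,l)\<in>A. i \<noteq> k \<and> i \<noteq> l \<and> j \<noteq> k \<and> j \<noteq> l"
      using a(4,5) unfolding mt_def by blast
    ultimately have "\<not> (\<forall>(k,l)\<in>A. \<not> (i < k \<and> k < j \<and> j < l) \<and> \<not> (k < i \<and> i < l \<and> l < j))"
      using stk_insert[OF nin] S a(1-3) by simp
    then show "\<exists>(k,l)\<in>A. (i < k \<and> k < j \<and> j < l) \<or> (k < i \<and> i < l \<and> l < j)"
      by blast
  qed
next
  assume H: "sat 1 (Suc n) A"
  then have S: "stk 1 (Suc n) A" by (simp add: sat_def)
  show "saturated2 n A" unfolding saturated2_def stack2_stk
  proof (intro conjI S allI impI)
    fix e assume e: "e \<notin> A"
    obtain i j where ij: "e = (i,j)" by (cases e)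
    show "\<not> stk 1 (Suc n) (insert e A)"
    proof
      assume S2: "stk 1 (Suc n) (insert e A)"
      have nin: "(i,j) \<notin> A" using e ij by simp
      note X = S2[unfolded ij stk_insert[OF nin]]
      have ui: "\<not> mt A i" "\<not> mt A j" using X unfolding mt_def by blast+
      obtain k l where kl: "(k,l) \<in> A" "(i < k \<and> k < j \<and> j < l) \<or> (k < i \<and> i < l \<and> l < j)"
        using H X ui unfolding sat_def by blast
      show False using X kl by blast
    qed
  qed
qed

definition box :: "nat \<Rightarrow> nat \<Rightarrow> (nat \<times> nat) set \<Rightarrow> bool" where
  "box lo hi A \<longleftrightarrow> (\<forall>(i,j)\<in>A. lo \<le> i \<and> i + 2 \<le> j \<and> j < hi)"

lemma stk_box: "stk lo hi A \<Longrightarrow> box lo hi A"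
  unfolding stk_def box_def by blast

lemma box_mem: "box lo hi A \<Longrightarrow> (i,k) \<in> A \<Longrightarrow> lo \<le> i \<and> i + 2 \<le> k \<and> k < hi"
  unfolding box_def by blast

lemma stk_nc: "stk lo hi A \<Longrightarrow> (i,k) \<in> A \<Longrightarrow> (p,q) \<in> A \<Longrightarrow> \<not> (i < p \<and> p < k \<and> k < q)"
  unfolding stk_def by blast

lemma stk_dj: "stk lo hi A \<Longrightarrow> (i,k) \<in> A \<Longrightarrow> (p,q) \<in> A \<Longrightarrow> (i,k) \<noteq> (p,q) \<Longrightarrow> i \<noteq> p \<and> i \<noteq> q \<and> k \<noteq> p \<and> k \<noteq> q"
  unfolding stk_def by blast

lemma stk_mem: "stk lo hi A \<Longrightarrow> (i,k) \<in> A \<Longrightarrow> lo \<le> i \<and> i + 2 \<le> k \<and> k < hi"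
  unfolding stk_def by blast

lemma stkI:
  assumes "\<And>i k. (i,k)\<in>A \<Longrightarrow> lo \<le> i \<and> i+2 \<le> k \<and> k < hi"
   "\<And>i k p q. (i,k)\<in>A \<Longrightarrow> (p,q)\<in>A \<Longrightarrow> \<not>(i<p \<and> p<k \<and> k<q)"
   "\<And>i k p q. (i,k)\<in>A \<Longrightarrow> (p,q)\<in>A \<Longrightarrow> (i,k)\<noteq>(p,q) \<Longrightarrow> i\<noteq>p \<and> i\<noteq>q \<and> k\<noteq>p \<and> k\<noteq>q"
  shows "stk lo hi A"
  unfolding stk_def using assms by fast

lemma box_finite: "box lo hi A \<Longrightarrow> finite A"
proof -
  assume "box lo hi A"
  hence "A \<subseteq> {lo..<hi} \<times> {lo..<hi}" unfolding box_def by auto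
  thus "finite A" using finite_subset by blast
qed

lemma stk_finite: "stk lo hi A \<Longrightarrow> finite A"
  using stk_box box_finite by blast

lemma stk_card: assumes S: "stk lo hi A" shows "2 * card A \<le> hi - lo"
proof -
  have fin: "finite A" using S stk_finite by blast
  have i1: "inj_on fst A" unfolding inj_on_def using S unfolding stk_def by fastforce
  have i2: "inj_on snd A" unfolding inj_on_def using S unfolding stk_def by fastforce
  have d: "fst ` A \<inter> snd ` A = {}"
  proof (rule ccontr)
    assume "fst ` A \<inter> snd ` A \<noteq> {}"
    then obtain i j k l where "(i,j) \<in> A" "(k,l) \<in> A" "i = l" by force
    thus False using S unfolding stk_def by fastforce
  qed
  have sub: "fst ` A \<union> snd ` A \<subseteq> {lo..<hi}" using S unfolding stk_def by fastforce
  have "card (fst ` A \<union> snd ` A) = card A + card A"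
    using card_Un_disjoint[OF finite_imageI[OF fin] finite_imageI[OF fin] d]
      card_image[OF i1] card_image[OF i2] by simp
  moreover have "card (fst ` A \<union> snd ` A) \<le> hi - lo"
    using card_mono[OF _ sub] by simp
  ultimately show ?thesis by simp
qed

lemma stk_sub: assumes "stk lo hi B" "A \<subseteq> B" "box lo' hi' A" shows "stk lo' hi' A"
  apply (rule stkI)
  subgoal using assms(3) box_mem by blast
  subgoal using assms(1,2) stk_nc by blast
  subgoal using assms(1,2) stk_dj by blast
  done

lemma mt_glue: "mt (insert (lo,j) (A1 \<union> A2)) v \<longleftrightarrow> v = lo \<or> v = j \<or> mt A1 v \<or> mt A2 v"
  unfolding mt_def by auto

lemma stk_glue:
  assumes j: "lo + 2 \<le> j" "j < hi" and b1: "box (Suc lo) j A1" and b2: "box (Suc j) hi A2"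
  shows "stk lo hi (insert (lo,j) (A1 \<union> A2)) \<longleftrightarrow> stk (Suc lo) j A1 \<and> stk (Suc j) hi A2"
proof
  assume S: "stk lo hi (insert (lo,j) (A1 \<union> A2))"
  show "stk (Suc lo) j A1 \<and> stk (Suc j) hi A2"
    using stk_sub[OF S _ b1] stk_sub[OF S _ b2] by blast
next
  assume S: "stk (Suc lo) j A1 \<and> stk (Suc j) hi A2"
  have S1: "stk (Suc lo) j A1" and S2: "stk (Suc j) hi A2" using S by auto
  have mem: "\<And>x y. (x,y) \<in> insert (lo,j) (A1 \<union> A2) \<Longrightarrow> (x = lo \<and> y = j) \<or>
     ((x,y) \<in> A1 \<and> Suc lo \<le> x \<and> x+2 \<le> y \<and> y < j) \<or> ((x,y)\<in>A2 \<and> Suc j \<le> x \<and> x+2 \<le> y \<and> y < hi)"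
    using box_mem[OF b1] box_mem[OF b2] by blast
  show "stk lo hi (insert (lo,j) (A1 \<union> A2))"
  proof (rule stkI)
    fix i k assume "(i,k) \<in> insert (lo,j) (A1 \<union> A2)"
    from mem[OF this] j show "lo \<le> i \<and> i + 2 \<le> k \<and> k < hi" by auto
  next
    fix i k p q
    assume a: "(i,k) \<in> insert (lo,j) (A1 \<union> A2)" "(p,q) \<in> insert (lo,j) (A1 \<union> A2)"
    from mem[OF a(1)] mem[OF a(2)] stk_nc[OF S1, of i k p q] stk_nc[OF S2, of i k p q]
    show "\<not> (i < p \<and> p < k \<and> k < q)" by linarith
  next
    fix i k p q
    assume a: "(i,k) \<in> insert (lo,j) (A1 \<union> A2)" "(p,q) \<in> insert (lo,j) (A1 \<union> A2)" "(i,k) \<noteq> (p,q)"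
    from j mem[OF a(1)] mem[OF a(2)] a(3) stk_dj[OF S1, of i k p q] stk_dj[OF S2, of i k p q]
    show "i \<noteq> p \<and> i \<noteq> q \<and> k \<noteq> p \<and> k \<noteq> q" by auto
  qed
qed

definition xr :: "(nat \<times> nat) set \<Rightarrow> nat \<Rightarrow> nat \<Rightarrow> bool" where
  "xr A i j \<longleftrightarrow> (\<exists>k l. (k,l) \<in> A \<and> ((i < k \<and> k < j \<and> j < l) \<or> (k < i \<and> i < l \<and> l < j)))"

lemma sat_def2: "sat lo hi A \<longleftrightarrow> stk lo hi A \<and>
   (\<forall>i j. lo \<le> i \<longrightarrow> i + 2 \<le> j \<longrightarrow> j < hi \<longrightarrow> \<not> mt A i \<longrightarrow> \<not> mt A j \<longrightarrow> xr A i j)"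
  unfolding sat_def xr_def by (simp add: Bex_def split_def)

lemma satI: "stk lo hi A \<Longrightarrow> (\<And>i j. lo \<le> i \<Longrightarrow> i + 2 \<le> j \<Longrightarrow> j < hi \<Longrightarrow> \<not> mt A i \<Longrightarrow> \<not> mt A j \<Longrightarrow> xr A i j)
  \<Longrightarrow> sat lo hi A"
  unfolding sat_def2 by blast

lemma satD: "sat lo hi A \<Longrightarrow> lo \<le> i \<Longrightarrow> i + 2 \<le> j \<Longrightarrow> j < hi \<Longrightarrow> \<not> mt A i \<Longrightarrow> \<not> mt A j \<Longrightarrow> xr A i j"
  unfolding sat_def2 by blast

lemma sat_stk: "sat lo hi A \<Longrightarrow> stk lo hi A"
  unfolding sat_def by blast

lemma mt_box: "box lo hi A \<Longrightarrow> mt A v \<Longrightarrow> lo \<le> v \<and> v < hi"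
  unfolding mt_def using box_mem by fastforce

lemma xr_glue: "xr (insert (lo,j) (A1 \<union> A2)) i k \<longleftrightarrow>
   ((i < lo \<and> lo < k \<and> k < j) \<or> (lo < i \<and> i < j \<and> j < k)) \<or> xr A1 i k \<or> xr A2 i k"
  unfolding xr_def by blast

lemma xr_box1: "box lo hi A \<Longrightarrow> xr A i k \<Longrightarrow> i < k \<Longrightarrow> k < lo \<or> hi \<le> i \<or> (lo \<le> i \<and> k < hi) \<or> (lo < i \<and> i < hi) \<or> (lo < k \<and> k < hi)"
  unfolding xr_def using box_mem by fastforce

lemma xr_out: assumes "box lo hi A" "xr A i k" "i < k" shows "\<not> (k \<le> lo) \<and> \<not> (hi \<le> i)"
proof -
  obtain p q where pq: "(p,q) \<in> A" "(i < p \<and> p < k \<and> k < q) \<or> (p < i \<and> i < q \<and> q < k)"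
    using assms(2) unfolding xr_def by blast
  have "lo \<le> p" "q < hi" using box_mem[OF assms(1) pq(1)] by auto
  thus ?thesis using pq(2) by auto
qed

lemma sat_glue:
  assumes j: "lo + 2 \<le> j" "j < hi" and b1: "box (Suc lo) j A1" and b2: "box (Suc j) hi A2"
  shows "sat lo hi (insert (lo,j) (A1 \<union> A2)) \<longleftrightarrow> sat (Suc lo) j A1 \<and> sat (Suc j) hi A2"
    (is "sat lo hi ?B \<longleftrightarrow> _")
proof
  assume S: "sat lo hi ?B"
  have st: "stk (Suc lo) j A1" "stk (Suc j) hi A2" using stk_glue[OF j b1 b2] sat_stk[OF S] by auto
  show "sat (Suc lo) j A1 \<and> sat (Suc j) hi A2"
  proof
    show "sat (Suc lo) j A1"
    proof (rule satI[OF st(1)])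
      fix i k assume a: "Suc lo \<le> i" "i + 2 \<le> k" "k < j" "\<not> mt A1 i" "\<not> mt A1 k"
      have "\<not> mt A2 i" "\<not> mt A2 k" using mt_box[OF b2, of i] mt_box[OF b2, of k] a by auto
      hence "\<not> mt ?B i" "\<not> mt ?B k" using a j unfolding mt_glue by auto
      hence "xr ?B i k" using satD[OF S, of i k] a j by auto
      moreover have "\<not> xr A2 i k" using xr_out[OF b2, of i k] a by auto
      ultimately show "xr A1 i k" unfolding xr_glue using a by auto
    qed
    show "sat (Suc j) hi A2"
    proof (rule satI[OF st(2)])
      fix i k assume a: "Suc j \<le> i" "i + 2 \<le> k" "k < hi" "\<not> mt A2 i" "\<not> mt A2 k"
      have "\<not> mt A1 i" "\<not> mt A1 k" using mt_box[OF b1, of i] mt_box[OF b1, of k] a by auto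
      hence "\<not> mt ?B i" "\<not> mt ?B k" using a j unfolding mt_glue by auto
      hence "xr ?B i k" using satD[OF S, of i k] a j by auto
      moreover have "\<not> xr A1 i k" using xr_out[OF b1, of i k] a by auto
      ultimately show "xr A2 i k" unfolding xr_glue using a by auto
    qed
  qed
next
  assume S: "sat (Suc lo) j A1 \<and> sat (Suc j) hi A2"
  have st: "stk lo hi ?B" using stk_glue[OF j b1 b2] sat_stk S by auto
  show "sat lo hi ?B"
  proof (rule satI[OF st])
    fix i k assume a: "lo \<le> i" "i + 2 \<le> k" "k < hi" "\<not> mt ?B i" "\<not> mt ?B k"
    have u: "i \<noteq> lo" "i \<noteq> j" "k \<noteq> lo" "k \<noteq> j" "\<not> mt A1 i" "\<not> mt A1 k" "\<not> mt A2 i" "\<not> mt A2 k"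
      using a(4,5) unfolding mt_glue by auto
    consider "k < j" | "j < i" | "i < j \<and> j < k" using u by linarith
    thus "xr ?B i k"
    proof cases
      case 1 thus ?thesis using satD[of "Suc lo" j A1 i k] S a u unfolding xr_glue by auto
    next
      case 2 thus ?thesis using satD[of "Suc j" hi A2 i k] S a u unfolding xr_glue by auto
    next
      case 3 thus ?thesis using a u unfolding xr_glue by auto
    qed
  qed
qed

lemma cov_glue: "cov (insert (lo,j) (A1 \<union> A2)) v \<longleftrightarrow> (lo < v \<and> v < j) \<or> cov A1 v \<or> cov A2 v"
  unfolding cov_def by blast

lemma cov_box: "box lo hi A \<Longrightarrow> cov A v \<Longrightarrow> lo < v \<and> Suc v < hi"
  unfolding cov_def using box_mem by fastforce

lemma oe_glue:
  assumes j: "lo + 2 \<le> j" "j < hi" and b1: "box (Suc lo) j A1" and b2: "box (Suc j) hi A2"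
  shows "oe lo hi (insert (lo,j) (A1 \<union> A2)) \<longleftrightarrow> oe (Suc j) hi A2"
    (is "oe lo hi ?B \<longleftrightarrow> _")
proof
  assume S: "oe lo hi ?B"
  show "oe (Suc j) hi A2" unfolding oe_def
  proof (intro allI impI)
    fix v assume a: "Suc j \<le> v" "v < hi" "\<not> mt A2 v"
    have "\<not> mt A1 v" using mt_box[OF b1, of v] a by auto
    hence "\<not> mt ?B v" using a j unfolding mt_glue by auto
    hence "cov ?B v" using S a j unfolding oe_def by auto
    moreover have "\<not> cov A1 v" using cov_box[OF b1, of v] a by auto
    ultimately show "cov A2 v" unfolding cov_glue using a by auto
  qed
next
  assume S: "oe (Suc j) hi A2"
  show "oe lo hi ?B" unfolding oe_def
  proof (intro allI impI)
    fix v assume a: "lo \<le> v" "v < hi" "\<not> mt ?B v"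
    have u: "v \<noteq> lo" "v \<noteq> j" "\<not> mt A2 v" using a(3) unfolding mt_glue by auto
    show "cov ?B v"
    proof (cases "v < j")
      case True thus ?thesis using u a unfolding cov_glue by auto
    next
      case False thus ?thesis using u a S unfolding cov_glue oe_def by auto
    qed
  qed
qed

lemma unm_box: assumes "stk lo hi A" "\<not> mt A lo" shows "box (Suc lo) hi A"
  unfolding box_def
proof (clarify)
  fix i k assume "(i,k) \<in> A"
  moreover have "i \<noteq> lo" using assms(2) calculation unfolding mt_def by blast
  ultimately show "Suc lo \<le> i \<and> i + 2 \<le> k \<and> k < hi" using stk_mem[OF assms(1)] by force
qed

lemma stk_box_stk: "stk lo hi A \<Longrightarrow> box lo' hi' A \<Longrightarrow> stk lo' hi' A"
  using stk_sub by blast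

lemma sat_unm:
  assumes S: "stk lo hi A" and u: "\<not> mt A lo"
  shows "sat lo hi A \<longleftrightarrow> sat (Suc lo) hi A \<and> (\<forall>v. Suc (Suc lo) \<le> v \<longrightarrow> v < hi \<longrightarrow> \<not> mt A v \<longrightarrow> cov A v)"
proof -
  have b: "box (Suc lo) hi A" using unm_box[OF S u] .
  have S': "stk (Suc lo) hi A" using stk_box_stk[OF S b] .
  show ?thesis
  proof
    assume H: "sat lo hi A"
    show "sat (Suc lo) hi A \<and> (\<forall>v. Suc (Suc lo) \<le> v \<longrightarrow> v < hi \<longrightarrow> \<not> mt A v \<longrightarrow> cov A v)"
    proof (intro conjI allI impI)
      show "sat (Suc lo) hi A" using S' H satD[OF H] by (intro satI) auto
    next
      fix v assume a: "Suc (Suc lo) \<le> v" "v < hi" "\<not> mt A v"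
      have "xr A lo v" using satD[OF H, of lo v] a u by auto
      then obtain p q where pq: "(p,q) \<in> A" "(lo < p \<and> p < v \<and> v < q) \<or> (p < lo \<and> lo < q \<and> q < v)"
        unfolding xr_def by blast
      have "Suc lo \<le> p" using box_mem[OF b pq(1)] by auto
      thus "cov A v" using pq unfolding cov_def by auto
    qed
  next
    assume H: "sat (Suc lo) hi A \<and> (\<forall>v. Suc (Suc lo) \<le> v \<longrightarrow> v < hi \<longrightarrow> \<not> mt A v \<longrightarrow> cov A v)"
    show "sat lo hi A"
    proof (rule satI[OF S])
      fix i k assume a: "lo \<le> i" "i + 2 \<le> k" "k < hi" "\<not> mt A i" "\<not> mt A k"
      show "xr A i k"
      proof (cases "i = lo")
        case False thus ?thesis using H a satD[of "Suc lo" hi A i k] by auto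
      next
        case True
        have "cov A k" using H a True by auto
        then obtain p q where "(p,q) \<in> A" "p < k" "k < q" unfolding cov_def by blast
        moreover have "Suc lo \<le> p" using box_mem[OF b calculation(1)] by auto
        ultimately show ?thesis unfolding xr_def using True
          by (intro exI[of _ p] exI[of _ q]) auto
      qed
    qed
  qed
qed

lemma oe_unm: assumes "box (Suc lo) hi A" "lo < hi" "oe lo hi A" shows False
proof -
  have "\<not> mt A lo" using mt_box[OF assms(1), of lo] by auto
  hence "cov A lo" using assms(2,3) unfolding oe_def by auto
  from cov_box[OF assms(1) this] show False by auto
qed

definition FF :: "bool \<Rightarrow> nat \<Rightarrow> nat \<Rightarrow> nat \<Rightarrow> (nat \<times> nat) set set" where
  "FF b lo u m = {A. sat lo (lo+u+2*m) A \<and> (b \<longrightarrow> oe lo (lo+u+2*m) A) \<and> card A = m}"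

definition II :: "nat \<Rightarrow> nat \<Rightarrow> (nat \<times> nat) set" where
  "II u m = {p. fst p \<le> u \<and> snd p < m \<and> 1 \<le> fst p + 2 * snd p}"

definition gl :: "nat \<Rightarrow> (nat \<times> nat) \<times> ((nat \<times> nat) set \<times> (nat \<times> nat) set) \<Rightarrow> (nat \<times> nat) set" where
  "gl lo x = insert (lo, lo + 1 + fst (fst x) + 2 * snd (fst x)) (fst (snd x) \<union> snd (snd x))"

definition pj :: "(nat \<times> nat) set \<Rightarrow> nat \<Rightarrow> nat" where
  "pj A lo = (THE j. (lo,j) \<in> A)"

definition sp :: "nat \<Rightarrow> (nat \<times> nat) set \<Rightarrow> (nat \<times> nat) \<times> ((nat \<times> nat) set \<times> (nat \<times> nat) set)" where
  "sp lo A = (let j = pj A lo; A1 = {p\<in>A. snd p < j}; A2 = {p\<in>A. j < fst p}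
              in ((j - Suc lo - 2 * card A1, card A1), (A1, A2)))"

definition DOM :: "bool \<Rightarrow> nat \<Rightarrow> nat \<Rightarrow> nat \<Rightarrow> ((nat \<times> nat) \<times> ((nat \<times> nat) set \<times> (nat \<times> nat) set)) set" where
  "DOM b lo u m = (SIGMA p:II u m. FF False (Suc lo) (fst p) (snd p) \<times> FF b (lo + 2 + fst p + 2 * snd p) (u - fst p) (m - 1 - snd p))"

lemma II_finite: "finite (II u m)"
proof -
  have "II u m \<subseteq> {..u} \<times> {..<m}" unfolding II_def by auto
  thus ?thesis using finite_subset by blast
qed

lemma stk_set_finite: "finite {A. stk lo hi A}"
proof -
  have "{A. stk lo hi A} \<subseteq> Pow ({lo..<hi} \<times> {lo..<hi})"
    using stk_mem by fastforce
  thus ?thesis using finite_subset by blast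
qed

lemma FF_finite: "finite (FF b lo u m)"
proof -
  have "FF b lo u m \<subseteq> {A. stk lo (lo+u+2*m) A}" unfolding FF_def using sat_stk by blast
  thus ?thesis using stk_set_finite finite_subset by blast
qed

lemma pj_eq: assumes "stk lo hi A" "(lo,j) \<in> A" shows "pj A lo = j"
  unfolding pj_def
proof (rule the_equality)
  show "(lo,j) \<in> A" by fact
  fix j' assume "(lo,j') \<in> A"
  thus "j' = j" using stk_dj[OF assms(1) assms(2) \<open>(lo,j') \<in> A\<close>] by auto
qed

lemma box_weaken: "box lo hi A \<Longrightarrow> lo' \<le> lo \<Longrightarrow> hi \<le> hi' \<Longrightarrow> box lo' hi' A"
  unfolding box_def by fastforce

lemma gl_props:
  assumes x: "x \<in> DOM b lo u m"
  defines "j \<equiv> lo + 1 + fst (fst x) + 2 * snd (fst x)"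
  shows "gl lo x \<in> FF b lo u m" "mt (gl lo x) lo" "sp lo (gl lo x) = x"
proof -
  obtain u1 m1 A1 A2 where xe: "x = ((u1,m1),(A1,A2))" by (metis prod.collapse)
  have I: "u1 \<le> u" "m1 < m" "1 \<le> u1 + 2*m1" using x unfolding xe DOM_def II_def by auto
  have jj: "j = lo + 1 + u1 + 2*m1" unfolding j_def xe by simp
  have xm: "A1 \<in> FF False (Suc lo) u1 m1" "A2 \<in> FF b (lo + 2 + u1 + 2 * m1) (u - u1) (m - 1 - m1)"
    using x unfolding xe DOM_def by auto
  have hx: "lo + 2 + u1 + 2 * m1 + (u - u1) + 2 * (m - 1 - m1) = lo+u+2*m" "lo + 2 + u1 + 2 * m1 = Suc j"
     "Suc lo + u1 + 2 * m1 = j" using I jj by auto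
  have A1: "sat (Suc lo) j A1" "card A1 = m1" using xm(1) unfolding FF_def hx(3) by auto
  have A2: "sat (Suc j) (lo+u+2*m) A2" "b \<longrightarrow> oe (Suc j) (lo+u+2*m) A2" "card A2 = m - 1 - m1"
    using xm(2) unfolding FF_def hx(1) unfolding hx(2) by auto
  have j: "lo + 2 \<le> j" "j < lo+u+2*m" using I jj by auto
  have b1: "box (Suc lo) j A1" using stk_box[OF sat_stk[OF A1(1)]] .
  have b2: "box (Suc j) (lo+u+2*m) A2" using stk_box[OF sat_stk[OF A2(1)]] .
  have g: "gl lo x = insert (lo,j) (A1 \<union> A2)" unfolding gl_def xe jj by simp
  have f1: "finite A1" "finite A2" using box_finite b1 b2 by auto
  have dis: "A1 \<inter> A2 = {}" using box_mem[OF b1] box_mem[OF b2] by fastforce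
  have nin: "(lo,j) \<notin> A1 \<union> A2" using box_mem[OF b1, of lo j] box_mem[OF b2, of lo j] by auto
  have cardg: "card (gl lo x) = m"
    unfolding g using card_insert_disjoint[of "A1 \<union> A2" "(lo,j)"] f1 nin card_Un_disjoint[OF f1 dis] A1 A2 I
    by auto
  have satg: "sat lo (lo+u+2*m) (gl lo x)" unfolding g using sat_glue[OF j b1 b2] A1 A2 by auto
  have oeg: "b \<longrightarrow> oe lo (lo+u+2*m) (gl lo x)" unfolding g using oe_glue[OF j b1 b2] A2 by auto
  show "gl lo x \<in> FF b lo u m" unfolding FF_def using satg oeg cardg by auto
  show "mt (gl lo x) lo" unfolding g mt_def by auto
  have pjg: "pj (gl lo x) lo = j" using pj_eq[OF sat_stk[OF satg]] g by auto
  have e1: "{p \<in> gl lo x. snd p < j} = A1" unfolding g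
  proof (rule set_eqI)
    fix p :: "nat \<times> nat" obtain i k where "p = (i,k)" by (cases p)
    thus "p \<in> {p \<in> insert (lo, j) (A1 \<union> A2). snd p < j} \<longleftrightarrow> p \<in> A1"
      using box_mem[OF b1, of i k] box_mem[OF b2, of i k] j by auto
  qed
  have e2: "{p \<in> gl lo x. j < fst p} = A2" unfolding g
  proof (rule set_eqI)
    fix p :: "nat \<times> nat" obtain i k where "p = (i,k)" by (cases p)
    thus "p \<in> {p \<in> insert (lo, j) (A1 \<union> A2). j < fst p} \<longleftrightarrow> p \<in> A2"
      using box_mem[OF b1, of i k] box_mem[OF b2, of i k] j by auto
  qed
  have "sp lo (gl lo x) = ((j - Suc lo - 2*card A1, card A1),(A1,A2))"
    unfolding sp_def Let_def pjg e1 e2 by simp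
  thus "sp lo (gl lo x) = x" unfolding xe using A1(2) jj by auto
qed

lemma sp_props:
  assumes A: "A \<in> FF b lo u m" and mtl: "mt A lo"
  shows "sp lo A \<in> DOM b lo u m" "gl lo (sp lo A) = A"
proof -
  define hi where "hi = lo + u + 2*m"
  have S: "sat lo hi A" and O: "b \<longrightarrow> oe lo hi A" and cA: "card A = m" using A unfolding FF_def hi_def by auto
  have st: "stk lo hi A" using sat_stk[OF S] .
  obtain j where lj: "(lo,j) \<in> A"
  proof -
    from mtl obtain i k where ik: "(i,k) \<in> A" "lo = i \<or> lo = k" unfolding mt_def by blast
    have "lo = i" using ik stk_mem[OF st ik(1)] by auto
    thus ?thesis using ik that by blast
  qed
  have j: "lo + 2 \<le> j" "j < hi" using stk_mem[OF st lj] by auto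
  define A1 where "A1 = {p\<in>A. snd p < j}"
  define A2 where "A2 = {p\<in>A. j < fst p}"
  have decomp: "A = insert (lo,j) (A1 \<union> A2)"
  proof (rule set_eqI, rule iffI)
    fix x assume xA: "x \<in> A"
    obtain i k where xe: "x = (i,k)" by (cases x)
    show "x \<in> insert (lo,j) (A1 \<union> A2)"
    proof (cases "x = (lo,j)")
      case False
      have d: "i \<noteq> lo" "i \<noteq> j" "k \<noteq> lo" "k \<noteq> j" using stk_dj[OF st, of i k lo j] xA xe lj False by auto
      have r: "lo \<le> i" "i + 2 \<le> k" using stk_mem[OF st, of i k] xA xe by auto
      have nc: "\<not> (lo < i \<and> i < j \<and> j < k)" using stk_nc[OF st lj, of i k] xA xe by auto
      show ?thesis
      proof (cases "i < j")
        case True thus ?thesis using d r nc xA xe unfolding A1_def by auto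
      next
        case False thus ?thesis using d r xA xe unfolding A2_def by auto
      qed
    qed simp
  next
    fix x assume "x \<in> insert (lo,j) (A1 \<union> A2)"
    thus "x \<in> A" using lj unfolding A1_def A2_def by auto
  qed
  have b1: "box (Suc lo) j A1" unfolding box_def
  proof (clarify)
    fix i k assume "(i,k) \<in> A1"
    hence a: "(i,k) \<in> A" "k < j" unfolding A1_def by auto
    have "i \<noteq> lo" using stk_dj[OF st a(1) lj] a(2) by auto
    thus "Suc lo \<le> i \<and> i + 2 \<le> k \<and> k < j" using stk_mem[OF st a(1)] a by auto
  qed
  have b2: "box (Suc j) hi A2" unfolding box_def
  proof (clarify)
    fix i k assume "(i,k) \<in> A2"
    hence a: "(i,k) \<in> A" "j < i" unfolding A2_def by auto
    thus "Suc j \<le> i \<and> i + 2 \<le> k \<and> k < hi" using stk_mem[OF st a(1)] a by auto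
  qed
  have SS: "sat (Suc lo) j A1" "sat (Suc j) hi A2" using sat_glue[OF j b1 b2] S decomp by auto
  have OO: "b \<longrightarrow> oe (Suc j) hi A2" using oe_glue[OF j b1 b2] O decomp by auto
  define m1 where "m1 = card A1"
  define m2 where "m2 = card A2"
  have c1: "2 * m1 \<le> j - Suc lo" using stk_card[OF sat_stk[OF SS(1)]] unfolding m1_def .
  have c2: "2 * m2 \<le> hi - Suc j" using stk_card[OF sat_stk[OF SS(2)]] unfolding m2_def .
  have f1: "finite A1" "finite A2" using box_finite b1 b2 by auto
  have dis: "A1 \<inter> A2 = {}" using box_mem[OF b1] box_mem[OF b2] by fastforce
  have nin: "(lo,j) \<notin> A1 \<union> A2" using box_mem[OF b1, of lo j] box_mem[OF b2, of lo j] by auto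
  have cm: "m = Suc (m1 + m2)" using cA decomp card_insert_disjoint[of "A1 \<union> A2" "(lo,j)"] f1 nin
      card_Un_disjoint[OF f1 dis] unfolding m1_def m2_def by auto
  define u1 where "u1 = j - Suc lo - 2 * m1"
  have pjA: "pj A lo = j" using pj_eq[OF st lj] .
  have spA: "sp lo A = ((u1, m1), (A1, A2))" unfolding sp_def Let_def pjA u1_def m1_def A1_def A2_def by simp
  have ar: "u1 \<le> u" "m1 < m" "1 \<le> u1 + 2*m1" "Suc lo + u1 + 2*m1 = j"
     "lo + 2 + u1 + 2*m1 + (u - u1) + 2 * (m - 1 - m1) = hi" "m2 = m - 1 - m1"
    using c1 c2 j cm unfolding u1_def hi_def by auto
  have m1: "A1 \<in> FF False (Suc lo) u1 m1" unfolding FF_def ar(4) using SS(1) m1_def by simp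
  have m2: "A2 \<in> FF b (lo + 2 + u1 + 2 * m1) (u - u1) (m - 1 - m1)" unfolding FF_def ar(5)
    using SS(2) OO ar(6) m2_def ar(4) by auto
  show "sp lo A \<in> DOM b lo u m" unfolding spA DOM_def
  proof (rule SigmaI)
    show "(u1, m1) \<in> II u m" unfolding II_def using ar by auto
    show "(A1, A2) \<in> FF False (Suc lo) (fst (u1, m1)) (snd (u1, m1)) \<times>
      FF b (lo + 2 + fst (u1, m1) + 2 * snd (u1, m1)) (u - fst (u1, m1)) (m - 1 - snd (u1, m1))"
      using m1 m2 by simp
  qed
  show "gl lo (sp lo A) = A" unfolding spA gl_def using decomp ar by simp
qed

lemma card_matched:
  "card {A \<in> FF b lo u m. mt A lo} =
   (\<Sum>p\<in>II u m. card (FF False (Suc lo) (fst p) (snd p)) * card (FF b (lo + 2 + fst p + 2 * snd p) (u - fst p) (m - 1 - snd p)))"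
proof -
  have "bij_betw (gl lo) (DOM b lo u m) {A \<in> FF b lo u m. mt A lo}"
    by (rule bij_betw_byWitness[where f'="sp lo"]) (use gl_props sp_props in auto)
  hence "card {A \<in> FF b lo u m. mt A lo} = card (DOM b lo u m)" by (simp add: bij_betw_same_card)
  also have "\<dots> = (\<Sum>p\<in>II u m. card (FF False (Suc lo) (fst p) (snd p) \<times> FF b (lo + 2 + fst p + 2 * snd p) (u - fst p) (m - 1 - snd p)))"
    unfolding DOM_def by (rule card_SigmaI) (auto simp: II_finite FF_finite)
  also have "\<dots> = (\<Sum>p\<in>II u m. card (FF False (Suc lo) (fst p) (snd p)) * card (FF b (lo + 2 + fst p + 2 * snd p) (u - fst p) (m - 1 - snd p)))"
    by (rule sum.cong) (auto simp: card_cartesian_product)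
  finally show ?thesis .
qed

lemma EE_unm: assumes "1 \<le> u + 2*m" shows "{A \<in> FF True lo u m. \<not> mt A lo} = {}"
proof -
  { fix A assume A: "A \<in> FF True lo u m" "\<not> mt A lo"
    have st: "stk lo (lo+u+2*m) A" and o: "oe lo (lo+u+2*m) A" using A(1) sat_stk unfolding FF_def by auto
    have lt: "lo < lo+u+2*m" using assms by auto
    have False using oe_unm[OF unm_box[OF st A(2)] lt o] . }
  thus ?thesis by auto
qed

lemma box_mono_lo: "box (Suc lo) hi A \<Longrightarrow> box lo hi A"
  using box_weaken by auto

lemma SS_unm: assumes L: "1 \<le> u + 2*m"
  shows "{A \<in> FF False lo u m. \<not> mt A lo} =
     (if u = 0 then {} else FF True (Suc lo) (u-1) m \<union> (if 2 \<le> u then FF True (Suc (Suc lo)) (u-2) m else {}))"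
proof (rule set_eqI, rule iffI)
  fix A assume A: "A \<in> {A \<in> FF False lo u m. \<not> mt A lo}"
  define hi where "hi = lo+u+2*m"
  have S: "sat lo hi A" "card A = m" "\<not> mt A lo" using A unfolding FF_def hi_def by auto
  have st: "stk lo hi A" using sat_stk[OF S(1)] .
  have b: "box (Suc lo) hi A" using unm_box[OF st S(3)] .
  have st': "stk (Suc lo) hi A" using stk_box_stk[OF st b] .
  have u0: "u \<noteq> 0"
  proof
    assume "u = 0"
    thus False using stk_card[OF st'] S(2) L unfolding hi_def by auto
  qed
  have su: "sat (Suc lo) hi A" "\<forall>v. Suc (Suc lo) \<le> v \<longrightarrow> v < hi \<longrightarrow> \<not> mt A v \<longrightarrow> cov A v"
    using sat_unm[OF st S(3)] S(1) by auto
  have hi1: "Suc lo + (u - 1) + 2 * m = hi" using u0 unfolding hi_def by auto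
  show "A \<in> (if u = 0 then {} else FF True (Suc lo) (u-1) m \<union> (if 2 \<le> u then FF True (Suc (Suc lo)) (u-2) m else {}))"
  proof (cases "mt A (Suc lo)")
    case True
    have "oe (Suc lo) hi A" unfolding oe_def
    proof (intro allI impI)
      fix v assume "Suc lo \<le> v" "v < hi" "\<not> mt A v"
      thus "cov A v" using su(2) True by (cases "v = Suc lo") auto
    qed
    hence "A \<in> FF True (Suc lo) (u-1) m" unfolding FF_def hi1 using su(1) S(2) by auto
    thus ?thesis using u0 by auto
  next
    case False
    show ?thesis
    proof (cases "u = 1 \<and> m = 0")
      case True
      have "A = {}" using S(2) True box_finite[OF b] by auto
      moreover have "{} \<in> FF True (Suc lo) (u-1) m" using True unfolding FF_def sat_def2 oe_def stk_def mt_def by auto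
      ultimately show ?thesis using u0 by auto
    next
      case nt: False
      have su2: "sat (Suc (Suc lo)) hi A" "\<forall>v. Suc (Suc (Suc lo)) \<le> v \<longrightarrow> v < hi \<longrightarrow> \<not> mt A v \<longrightarrow> cov A v"
        using sat_unm[OF st' False] su(1) by auto
      have b2: "box (Suc (Suc lo)) hi A" using unm_box[OF st' False] .
      have u2: "2 \<le> u"
      proof (rule ccontr)
        assume "\<not> 2 \<le> u"
        hence "u = 1" using u0 by auto
        thus False using stk_card[OF stk_box_stk[OF st b2]] S(2) nt unfolding hi_def by auto
      qed
      have hi2: "Suc (Suc lo) + (u - 2) + 2 * m = hi" using u2 unfolding hi_def by auto
      have "oe (Suc (Suc lo)) hi A" unfolding oe_def using su(2) by auto
      hence "A \<in> FF True (Suc (Suc lo)) (u-2) m" unfolding FF_def hi2 using su2(1) S(2) by auto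
      thus ?thesis using u0 u2 by auto
    qed
  qed
next
  fix A assume A: "A \<in> (if u = 0 then {} else FF True (Suc lo) (u-1) m \<union> (if 2 \<le> u then FF True (Suc (Suc lo)) (u-2) m else {}))"
  define hi where "hi = lo+u+2*m"
  have u0: "u \<noteq> 0" using A by (auto split: if_splits)
  have hi1: "Suc lo + (u - 1) + 2 * m = hi" using u0 unfolding hi_def by auto
  from A u0 consider "A \<in> FF True (Suc lo) (u-1) m" | "2 \<le> u" "A \<in> FF True (Suc (Suc lo)) (u-2) m"
    by (auto split: if_splits)
  thus "A \<in> {A \<in> FF False lo u m. \<not> mt A lo}"
  proof cases
    case 1
    have S: "sat (Suc lo) hi A" "oe (Suc lo) hi A" "card A = m" using 1 unfolding FF_def hi1 by auto
    have b: "box (Suc lo) hi A" using stk_box[OF sat_stk[OF S(1)]] .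
    have nm: "\<not> mt A lo" using mt_box[OF b, of lo] by auto
    have st: "stk lo hi A" using stk_box_stk[OF sat_stk[OF S(1)] box_mono_lo[OF b]] .
    have "sat lo hi A" using sat_unm[OF st nm] S(1,2) unfolding oe_def by auto
    thus ?thesis using S(3) nm unfolding FF_def hi_def by auto
  next
    case 2
    have hi2: "Suc (Suc lo) + (u - 2) + 2 * m = hi" using 2 unfolding hi_def by auto
    have S: "sat (Suc (Suc lo)) hi A" "oe (Suc (Suc lo)) hi A" "card A = m" using 2 unfolding FF_def hi2 by auto
    have b: "box (Suc (Suc lo)) hi A" using stk_box[OF sat_stk[OF S(1)]] .
    have nm: "\<not> mt A lo" "\<not> mt A (Suc lo)" using mt_box[OF b, of lo] mt_box[OF b, of "Suc lo"] by auto
    have st1: "stk (Suc lo) hi A" using stk_box_stk[OF sat_stk[OF S(1)] box_mono_lo[OF b]] .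
    have st: "stk lo hi A" using stk_box_stk[OF sat_stk[OF S(1)] box_weaken[OF b]] by auto
    have s1: "sat (Suc lo) hi A" using sat_unm[OF st1 nm(2)] S(1,2) unfolding oe_def by auto
    have "sat lo hi A" using sat_unm[OF st nm(1)] s1 S(2) unfolding oe_def by auto
    thus ?thesis using S(3) nm unfolding FF_def hi_def by auto
  qed
qed

lemma EE_disj: assumes "2 \<le> u" shows "FF True (Suc lo) (u-1) m \<inter> FF True (Suc (Suc lo)) (u-2) m = {}"
proof -
  { fix A assume A: "A \<in> FF True (Suc lo) (u-1) m" "A \<in> FF True (Suc (Suc lo)) (u-2) m"
    define hi where "hi = lo+u+2*m"
    have hi1: "Suc lo + (u - 1) + 2 * m = hi" "Suc (Suc lo) + (u - 2) + 2 * m = hi" using assms unfolding hi_def by auto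
    have S: "sat (Suc (Suc lo)) hi A" "oe (Suc lo) hi A" using A unfolding FF_def hi1 by auto
    have b: "box (Suc (Suc lo)) hi A" using stk_box[OF sat_stk[OF S(1)]] .
    have False using oe_unm[OF b _ S(2)] assms unfolding hi_def by auto }
  thus ?thesis by auto
qed

lemma card_unm: assumes L: "1 \<le> u + 2*m"
  shows "card {A \<in> FF False lo u m. \<not> mt A lo} =
     (if u = 0 then 0 else card (FF True (Suc lo) (u-1) m) + (if 2 \<le> u then card (FF True (Suc (Suc lo)) (u-2) m) else 0))"
  unfolding SS_unm[OF L] using card_Un_disjoint[OF FF_finite FF_finite EE_disj] by auto

lemma card_split: "card (FF b lo u m) = card {A \<in> FF b lo u m. mt A lo} + card {A \<in> FF b lo u m. \<not> mt A lo}"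
proof -
  have "FF b lo u m = {A \<in> FF b lo u m. mt A lo} \<union> {A \<in> FF b lo u m. \<not> mt A lo}" by auto
  moreover have "finite {A \<in> FF b lo u m. mt A lo}" "finite {A \<in> FF b lo u m. \<not> mt A lo}" using FF_finite by auto
  ultimately show ?thesis using card_Un_disjoint by (metis (no_types, lifting) disjoint_iff mem_Collect_eq)
qed

lemma FF_zero: "FF b lo 0 0 = {{}}"
proof -
  have "sat lo lo A \<Longrightarrow> A = {}" for A using stk_mem[OF sat_stk] by fastforce
  moreover have "sat lo lo {}" unfolding sat_def2 stk_def by auto
  moreover have "oe lo lo {}" unfolding oe_def by auto
  ultimately show ?thesis unfolding FF_def by auto
qed

lemma rec_S: assumes "1 \<le> u + 2*m"
  shows "card (FF False lo u m) =
    (if u = 0 then 0 else card (FF True (Suc lo) (u-1) m) + (if 2 \<le> u then card (FF True (Suc (Suc lo)) (u-2) m) else 0)) +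
    (\<Sum>p\<in>II u m. card (FF False (Suc lo) (fst p) (snd p)) * card (FF False (lo + 2 + fst p + 2 * snd p) (u - fst p) (m - 1 - snd p)))"
  using card_split[of False lo u m] card_unm[OF assms, of lo] card_matched[of False lo u m] by simp

lemma rec_E: assumes "1 \<le> u + 2*m"
  shows "card (FF True lo u m) =
    (\<Sum>p\<in>II u m. card (FF False (Suc lo) (fst p) (snd p)) * card (FF True (lo + 2 + fst p + 2 * snd p) (u - fst p) (m - 1 - snd p)))"
  using card_split[of True lo u m] EE_unm[OF assms, of lo] card_matched[of True lo u m] by simp

unbundle fps_syntax

lemma indep_aux: "u + 2*m = N \<Longrightarrow> card (FF b lo u m) = card (FF b 0 u m)"
proof (induct N arbitrary: b lo u m rule: less_induct)
  case (less N)
  show ?case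
  proof (cases "u + 2*m = 0")
    case True
    hence "u = 0" "m = 0" by auto
    thus ?thesis by (simp add: FF_zero)
  next
    case False
    hence L: "1 \<le> u + 2*m" by auto
    have IH: "\<And>b' lo' u' m'. u' + 2*m' < u + 2*m \<Longrightarrow> card (FF b' lo' u' m') = card (FF b' 0 u' m')"
      using less by metis
    have sumeq: "(\<Sum>p\<in>II u m. card (FF False (Suc l) (fst p) (snd p)) * card (FF b' (l + 2 + fst p + 2 * snd p) (u - fst p) (m - 1 - snd p)))
      = (\<Sum>p\<in>II u m. card (FF False 0 (fst p) (snd p)) * card (FF b' 0 (u - fst p) (m - 1 - snd p)))" for l b'
    proof (rule sum.cong[OF refl])
      fix p assume "p \<in> II u m"
      hence p: "fst p \<le> u" "snd p < m" unfolding II_def by auto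
      have "fst p + 2 * snd p < u + 2*m" "(u - fst p) + 2 * (m - 1 - snd p) < u + 2*m" using p by auto
      thus "card (FF False (Suc l) (fst p) (snd p)) * card (FF b' (l + 2 + fst p + 2 * snd p) (u - fst p) (m - 1 - snd p))
        = card (FF False 0 (fst p) (snd p)) * card (FF b' 0 (u - fst p) (m - 1 - snd p))"
        using IH by metis
    qed
    show ?thesis
    proof (cases b)
      case True
      have "card (FF True lo u m) = card (FF True 0 u m)"
        unfolding rec_E[OF L, of lo] rec_E[OF L, of 0] sumeq by (rule refl)
      thus ?thesis using True by simp
    next
      case False
      have t: "(if u = 0 then 0 else card (FF True (Suc l) (u-1) m) + (if 2 \<le> u then card (FF True (Suc (Suc l)) (u-2) m) else 0))
         = (if u = 0 then 0 else card (FF True 0 (u-1) m) + (if 2 \<le> u then card (FF True 0 (u-2) m) else 0))" for l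
      proof (cases "u = 0")
        case False
        have c1: "card (FF True (Suc l) (u-1) m) = card (FF True 0 (u-1) m)" by (rule IH) (use False in auto)
        have c2: "card (FF True (Suc (Suc l)) (u-2) m) = card (FF True 0 (u-2) m)" if "2 \<le> u"
          by (rule IH) (use that in auto)
        show ?thesis using c1 c2 by simp
      qed simp
      have "card (FF False lo u m) = card (FF False 0 u m)"
        unfolding rec_S[OF L, of lo] rec_S[OF L, of 0] sumeq t by (rule refl)
      thus ?thesis using False by simp
    qed
  qed
qed

lemma indep: "card (FF b lo u m) = card (FF b 0 u m)"
  using indep_aux by blast

definition s :: "nat \<Rightarrow> nat \<Rightarrow> nat" where "s u m = card (FF False 0 u m)"
definition e :: "nat \<Rightarrow> nat \<Rightarrow> nat" where "e u m = card (FF True 0 u m)"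

lemma s_rec: assumes "1 \<le> u + 2*m"
  shows "s u m = (if u = 0 then 0 else e (u-1) m + (if 2 \<le> u then e (u-2) m else 0)) +
    (\<Sum>p\<in>II u m. s (fst p) (snd p) * s (u - fst p) (m - 1 - snd p))"
  unfolding s_def e_def rec_S[OF assms, of 0]
  by (subst (1 2 3 4) indep) (rule refl)

lemma e_rec: assumes "1 \<le> u + 2*m"
  shows "e u m = (\<Sum>p\<in>II u m. s (fst p) (snd p) * e (u - fst p) (m - 1 - snd p))"
  unfolding s_def e_def rec_E[OF assms, of 0]
  by (subst (1 2) indep) (rule refl)

lemma s00: "s 0 0 = 1" and e00: "e 0 0 = 1"
  unfolding s_def e_def FF_zero by auto

lemma s0: "s 0 m = (if m = 0 then 1 else 0)"
proof (induction m rule: less_induct)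
  case (less m)
  show ?case
  proof (cases "m = 0")
    case True thus ?thesis using s00 by simp
  next
    case False
    have "s 0 m = (\<Sum>p\<in>II 0 m. s (fst p) (snd p) * s (0 - fst p) (m - 1 - snd p))"
      using s_rec[of 0 m] False by simp
    also have "\<dots> = 0"
    proof (rule sum.neutral, rule ballI)
      fix p assume "p \<in> II 0 m"
      hence "fst p = 0" "1 \<le> snd p" "snd p < m" unfolding II_def by auto
      thus "s (fst p) (snd p) * s (0 - fst p) (m - 1 - snd p) = 0" using less[of "snd p"] by simp
    qed
    finally show ?thesis using False by simp
  qed
qed

lemma e0: "e 0 m = (if m = 0 then 1 else 0)"
proof (cases "m = 0")
  case True thus ?thesis using e00 by simp
next
  case False
  have "e 0 m = (\<Sum>p\<in>II 0 m. s (fst p) (snd p) * e (0 - fst p) (m - 1 - snd p))"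
    using e_rec[of 0 m] False by simp
  also have "\<dots> = 0"
  proof (rule sum.neutral, rule ballI)
    fix p assume "p \<in> II 0 m"
    hence "fst p = 0" "1 \<le> snd p" "snd p < m" unfolding II_def by auto
    thus "s (fst p) (snd p) * e (0 - fst p) (m - 1 - snd p) = 0" using s0[of "snd p"] by simp
  qed
  finally show ?thesis using False by simp
qed

lemma II_sum: assumes f0: "\<And>m1. 1 \<le> m1 \<Longrightarrow> f (0, m1) = (0::real)" and u: "1 \<le> u"
  shows "(\<Sum>p\<in>II u m. f p) = (\<Sum>u1\<in>{1..u}. \<Sum>m1<m. f (u1, m1))"
proof -
  have "(\<Sum>u1\<in>{1..u}. \<Sum>m1<m. f (u1, m1)) = (\<Sum>p\<in>{1..u} \<times> {..<m}. f p)"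
    by (simp add: sum.cartesian_product)
  also have "\<dots> = (\<Sum>p\<in>II u m. f p)"
  proof (rule sum.mono_neutral_left)
    show "finite (II u m)" by (rule II_finite)
    show "{1..u} \<times> {..<m} \<subseteq> II u m" unfolding II_def by auto
    show "\<forall>p\<in>II u m - {1..u} \<times> {..<m}. f p = 0"
    proof
      fix p assume "p \<in> II u m - {1..u} \<times> {..<m}"
      moreover obtain a b where ab: "p = (a,b)" by (cases p)
      ultimately have "a = 0" "1 \<le> b" unfolding II_def by auto
      thus "f p = 0" using f0[of b] ab by simp
    qed
  qed
  finally show ?thesis by simp
qed

definition Af :: "nat \<Rightarrow> real fps" where "Af u = Abs_fps (\<lambda>m. real (s u m))"
definition Ef :: "nat \<Rightarrow> real fps" where "Ef u = Abs_fps (\<lambda>m. real (e u m))"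

lemma Af0: "Af 0 = 1" unfolding Af_def by (rule fps_ext) (simp add: s0)
lemma Ef0: "Ef 0 = 1" unfolding Ef_def by (rule fps_ext) (simp add: e0)

lemma conv_nth: fixes F G :: "nat \<Rightarrow> real fps" shows "(fps_X * (\<Sum>u1\<in>{1..u}. F u1 * G u1)) $ m =
   (if m = 0 then 0 else (\<Sum>u1\<in>{1..u}. \<Sum>m1<m. F u1 $ m1 * G u1 $ (m - 1 - m1)))"
proof (cases m)
  case (Suc k)
  have "(fps_X * (\<Sum>u1\<in>{1..u}. F u1 * G u1)) $ m = (\<Sum>u1\<in>{1..u}. F u1 * G u1) $ k"
    unfolding Suc by (simp only: fps_X_mult_nth) simp
  also have "\<dots> = (\<Sum>u1\<in>{1..u}. \<Sum>m1\<in>{0..k}. F u1 $ m1 * G u1 $ (k - m1))"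
    by (simp only: fps_sum_nth fps_mult_nth)
  also have "\<dots> = (\<Sum>u1\<in>{1..u}. \<Sum>m1<m. F u1 $ m1 * G u1 $ (m - 1 - m1))"
    unfolding Suc atLeast0AtMost lessThan_Suc_atMost by simp
  finally show ?thesis using Suc by simp
qed simp

lemma A_rec: assumes u: "1 \<le> u"
  shows "Af u = Ef (u-1) + (if 2 \<le> u then Ef (u-2) else 0) + fps_X * (\<Sum>u1\<in>{1..u}. Af u1 * Af (u-u1))"
proof (rule fps_ext)
  fix m
  have L: "1 \<le> u + 2*m" using u by auto
  have "real (s u m) = real (e (u-1) m) + (if 2 \<le> u then real (e (u-2) m) else 0) +
    (\<Sum>p\<in>II u m. real (s (fst p) (snd p)) * real (s (u - fst p) (m - 1 - snd p)))"
    using s_rec[OF L] u by simp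
  also have "(\<Sum>p\<in>II u m. real (s (fst p) (snd p)) * real (s (u - fst p) (m - 1 - snd p)))
     = (\<Sum>u1\<in>{1..u}. \<Sum>m1<m. real (s u1 m1) * real (s (u - u1) (m - 1 - m1)))"
    using II_sum[OF _ u, where f="\<lambda>p. real (s (fst p) (snd p)) * real (s (u - fst p) (m - 1 - snd p))"]
    by (simp add: s0)
  finally show "Af u $ m = (Ef (u-1) + (if 2 \<le> u then Ef (u-2) else 0) + fps_X * (\<Sum>u1\<in>{1..u}. Af u1 * Af (u-u1))) $ m"
    unfolding fps_add_nth conv_nth by (cases "m = 0") (auto simp: Af_def Ef_def)
qed

lemma E_rec: assumes u: "1 \<le> u"
  shows "Ef u = fps_X * (\<Sum>u1\<in>{1..u}. Af u1 * Ef (u-u1))"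
proof (rule fps_ext)
  fix m
  have L: "1 \<le> u + 2*m" using u by auto
  have "real (e u m) = (\<Sum>p\<in>II u m. real (s (fst p) (snd p)) * real (e (u - fst p) (m - 1 - snd p)))"
    using e_rec[OF L] by simp
  also have "\<dots> = (\<Sum>u1\<in>{1..u}. \<Sum>m1<m. real (s u1 m1) * real (e (u - u1) (m - 1 - m1)))"
    using II_sum[OF _ u, where f="\<lambda>p. real (s (fst p) (snd p)) * real (e (u - fst p) (m - 1 - snd p))"]
    by (simp add: s0)
  finally show "Ef u $ m = (fps_X * (\<Sum>u1\<in>{1..u}. Af u1 * Ef (u-u1))) $ m"
    unfolding conv_nth by (cases "m = 0") (auto simp: Af_def Ef_def)
qed

definition D :: "real fps" where "D = Abs_fps (\<lambda>n. 1)"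

lemma XD: "fps_X * D = D - 1"
  unfolding D_def by (rule fps_ext) simp

lemma solve: assumes "a = r + fps_X * (q + a)" shows "a = D * r + (D - 1) * q"
proof -
  have "D * a = D * (r + fps_X * (q + a))" using assms by (rule arg_cong)
  also have "\<dots> = D * r + (fps_X * D) * q + (fps_X * D) * a" by (simp add: algebra_simps)
  finally have "D * a = D * r + (D - 1) * q + (D - 1) * a" unfolding XD .
  thus ?thesis by algebra
qed

lemma A1: "Af 1 = (1) * D ^ 1"
proof -
  have "Af 1 = Ef (1-1) + (if 2 \<le> (1::nat) then Ef (1-2) else 0) + fps_X * (\<Sum>u1\<in>{1..1}. Af u1 * Af (1-u1))"
    by (rule A_rec) simp
  also have "\<dots> = (Ef 0) + fps_X * ((0) + Af 1)"
    by (simp add: numeral_eq_Suc sum.atLeast_Suc_atMost add.assoc Af0)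
  finally have "Af 1 = D * (Ef 0) + (D - 1) * (0)" by (rule solve)
  thus ?thesis unfolding Ef0 by algebra
qed

lemma E1: "Ef 1 = (- 1) * 1 + (1) * D ^ 1"
proof -
  have q: "Af 1 * Ef 0 = D * ((1) * 1)"
    unfolding Ef0 A1 by algebra
  have "Ef 1 = fps_X * (\<Sum>u1\<in>{1..1}. Af u1 * Ef (1-u1))"
    by (rule E_rec) simp
  also have "\<dots> = fps_X * (Af 1 * Ef 0)"
    by (simp add: numeral_eq_Suc sum.atLeast_Suc_atMost add.assoc)
  also have "\<dots> = (fps_X * D) * ((1) * 1)" unfolding q by (simp only: mult.assoc)
  also have "\<dots> = (D - 1) * ((1) * 1)" unfolding XD ..
  also have "\<dots> = (- 1) * 1 + (1) * D ^ 1" by algebra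
  finally show ?thesis .
qed

lemma A2: "Af 2 = (1) * D ^ 3"
proof -
  have "Af 2 = Ef (2-1) + (if 2 \<le> (2::nat) then Ef (2-2) else 0) + fps_X * (\<Sum>u1\<in>{1..2}. Af u1 * Af (2-u1))"
    by (rule A_rec) simp
  also have "\<dots> = (Ef 1 + Ef 0) + fps_X * ((Af 1 * Af 1) + Af 2)"
    by (simp add: numeral_eq_Suc sum.atLeast_Suc_atMost add.assoc Af0)
  finally have "Af 2 = D * (Ef 1 + Ef 0) + (D - 1) * (Af 1 * Af 1)" by (rule solve)
  thus ?thesis unfolding Ef0 E1 A1 by algebra
qed

lemma E2: "Ef 2 = (1) * 1 + (- 2) * D ^ 1 + (1) * D ^ 3"
proof -
  have q: "Af 1 * Ef 1 + Af 2 * Ef 0 = D * ((- 1) * 1 + (1) * D ^ 1 + (1) * D ^ 2)"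
    unfolding Ef0 E1 A1 A2 by algebra
  have "Ef 2 = fps_X * (\<Sum>u1\<in>{1..2}. Af u1 * Ef (2-u1))"
    by (rule E_rec) simp
  also have "\<dots> = fps_X * (Af 1 * Ef 1 + Af 2 * Ef 0)"
    by (simp add: numeral_eq_Suc sum.atLeast_Suc_atMost add.assoc)
  also have "\<dots> = (fps_X * D) * ((- 1) * 1 + (1) * D ^ 1 + (1) * D ^ 2)" unfolding q by (simp only: mult.assoc)
  also have "\<dots> = (D - 1) * ((- 1) * 1 + (1) * D ^ 1 + (1) * D ^ 2)" unfolding XD ..
  also have "\<dots> = (1) * 1 + (- 2) * D ^ 1 + (1) * D ^ 3" by algebra
  finally show ?thesis .
qed

lemma A3: "Af 3 = (- 1) * D ^ 2 + (- 1) * D ^ 4 + (2) * D ^ 5"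
proof -
  have "Af 3 = Ef (3-1) + (if 2 \<le> (3::nat) then Ef (3-2) else 0) + fps_X * (\<Sum>u1\<in>{1..3}. Af u1 * Af (3-u1))"
    by (rule A_rec) simp
  also have "\<dots> = (Ef 2 + Ef 1) + fps_X * ((Af 1 * Af 2 + Af 2 * Af 1) + Af 3)"
    by (simp add: numeral_eq_Suc sum.atLeast_Suc_atMost add.assoc Af0)
  finally have "Af 3 = D * (Ef 2 + Ef 1) + (D - 1) * (Af 1 * Af 2 + Af 2 * Af 1)" by (rule solve)
  thus ?thesis unfolding Ef0 E1 E2 A1 A2 by algebra
qed

lemma E3: "Ef 3 = (- 1) * 1 + (4) * D ^ 1 + (- 2) * D ^ 2 + (- 2) * D ^ 3 + (- 1) * D ^ 4 + (2) * D ^ 5"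
proof -
  have q: "Af 1 * Ef 2 + Af 2 * Ef 1 + Af 3 * Ef 0 = D * ((1) * 1 + (- 3) * D ^ 1 + (- 1) * D ^ 2 + (1) * D ^ 3 + (2) * D ^ 4)"
    unfolding Ef0 E1 E2 A1 A2 A3 by algebra
  have "Ef 3 = fps_X * (\<Sum>u1\<in>{1..3}. Af u1 * Ef (3-u1))"
    by (rule E_rec) simp
  also have "\<dots> = fps_X * (Af 1 * Ef 2 + Af 2 * Ef 1 + Af 3 * Ef 0)"
    by (simp add: numeral_eq_Suc sum.atLeast_Suc_atMost add.assoc)
  also have "\<dots> = (fps_X * D) * ((1) * 1 + (- 3) * D ^ 1 + (- 1) * D ^ 2 + (1) * D ^ 3 + (2) * D ^ 4)" unfolding q by (simp only: mult.assoc)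
  also have "\<dots> = (D - 1) * ((1) * 1 + (- 3) * D ^ 1 + (- 1) * D ^ 2 + (1) * D ^ 3 + (2) * D ^ 4)" unfolding XD ..
  also have "\<dots> = (- 1) * 1 + (4) * D ^ 1 + (- 2) * D ^ 2 + (- 2) * D ^ 3 + (- 1) * D ^ 4 + (2) * D ^ 5" by algebra
  finally show ?thesis .
qed

lemma A4: "Af 4 = (2) * D ^ 2 + (- 3) * D ^ 4 + (1) * D ^ 5 + (- 5) * D ^ 6 + (5) * D ^ 7"
proof -
  have "Af 4 = Ef (4-1) + (if 2 \<le> (4::nat) then Ef (4-2) else 0) + fps_X * (\<Sum>u1\<in>{1..4}. Af u1 * Af (4-u1))"
    by (rule A_rec) simp
  also have "\<dots> = (Ef 3 + Ef 2) + fps_X * ((Af 1 * Af 3 + Af 2 * Af 2 + Af 3 * Af 1) + Af 4)"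
    by (simp add: numeral_eq_Suc sum.atLeast_Suc_atMost add.assoc Af0)
  finally have "Af 4 = D * (Ef 3 + Ef 2) + (D - 1) * (Af 1 * Af 3 + Af 2 * Af 2 + Af 3 * Af 1)" by (rule solve)
  thus ?thesis unfolding Ef0 E1 E2 E3 A1 A2 A3 by algebra
qed

lemma E4: "Ef 4 = (1) * 1 + (- 8) * D ^ 1 + (9) * D ^ 2 + (4) * D ^ 3 + (- 3) * D ^ 4 + (- 3) * D ^ 5 + (- 5) * D ^ 6 + (5) * D ^ 7"
proof -
  have q: "Af 1 * Ef 3 + Af 2 * Ef 2 + Af 3 * Ef 1 + Af 4 * Ef 0 = D * ((- 1) * 1 + (7) * D ^ 1 + (- 2) * D ^ 2 + (- 6) * D ^ 3 + (- 3) * D ^ 4 + (5) * D ^ 6)"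
    unfolding Ef0 E1 E2 E3 A1 A2 A3 A4 by algebra
  have "Ef 4 = fps_X * (\<Sum>u1\<in>{1..4}. Af u1 * Ef (4-u1))"
    by (rule E_rec) simp
  also have "\<dots> = fps_X * (Af 1 * Ef 3 + Af 2 * Ef 2 + Af 3 * Ef 1 + Af 4 * Ef 0)"
    by (simp add: numeral_eq_Suc sum.atLeast_Suc_atMost add.assoc)
  also have "\<dots> = (fps_X * D) * ((- 1) * 1 + (7) * D ^ 1 + (- 2) * D ^ 2 + (- 6) * D ^ 3 + (- 3) * D ^ 4 + (5) * D ^ 6)" unfolding q by (simp only: mult.assoc)
  also have "\<dots> = (D - 1) * ((- 1) * 1 + (7) * D ^ 1 + (- 2) * D ^ 2 + (- 6) * D ^ 3 + (- 3) * D ^ 4 + (5) * D ^ 6)" unfolding XD ..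
  also have "\<dots> = (1) * 1 + (- 8) * D ^ 1 + (9) * D ^ 2 + (4) * D ^ 3 + (- 3) * D ^ 4 + (- 3) * D ^ 5 + (- 5) * D ^ 6 + (5) * D ^ 7" by algebra
  finally show ?thesis .
qed

lemma A5: "Af 5 = (- 4) * D ^ 2 + (3) * D ^ 3 + (6) * D ^ 4 + (4) * D ^ 5 + (- 11) * D ^ 6 + (9) * D ^ 7 + (- 21) * D ^ 8 + (14) * D ^ 9"
proof -
  have "Af 5 = Ef (5-1) + (if 2 \<le> (5::nat) then Ef (5-2) else 0) + fps_X * (\<Sum>u1\<in>{1..5}. Af u1 * Af (5-u1))"
    by (rule A_rec) simp
  also have "\<dots> = (Ef 4 + Ef 3) + fps_X * ((Af 1 * Af 4 + Af 2 * Af 3 + Af 3 * Af 2 + Af 4 * Af 1) + Af 5)"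
    by (simp add: numeral_eq_Suc sum.atLeast_Suc_atMost add.assoc Af0)
  finally have "Af 5 = D * (Ef 4 + Ef 3) + (D - 1) * (Af 1 * Af 4 + Af 2 * Af 3 + Af 3 * Af 2 + Af 4 * Af 1)" by (rule solve)
  thus ?thesis unfolding Ef0 E1 E2 E3 E4 A1 A2 A3 A4 by algebra
qed

lemma E5: "Ef 5 = (- 1) * 1 + (16) * D ^ 1 + (- 30) * D ^ 2 + (- 1) * D ^ 3 + (18) * D ^ 4 + (12) * D ^ 5 + (- 6) * D ^ 6 + (- 1) * D ^ 7 + (- 21) * D ^ 8 + (14) * D ^ 9"
proof -
  have q: "Af 1 * Ef 4 + Af 2 * Ef 3 + Af 3 * Ef 2 + Af 4 * Ef 1 + Af 5 * Ef 0 = D * ((1) * 1 + (- 15) * D ^ 1 + (15) * D ^ 2 + (16) * D ^ 3 + (- 2) * D ^ 4 + (- 14) * D ^ 5 + (- 8) * D ^ 6 + (- 7) * D ^ 7 + (14) * D ^ 8)"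
    unfolding Ef0 E1 E2 E3 E4 A1 A2 A3 A4 A5 by algebra
  have "Ef 5 = fps_X * (\<Sum>u1\<in>{1..5}. Af u1 * Ef (5-u1))"
    by (rule E_rec) simp
  also have "\<dots> = fps_X * (Af 1 * Ef 4 + Af 2 * Ef 3 + Af 3 * Ef 2 + Af 4 * Ef 1 + Af 5 * Ef 0)"
    by (simp add: numeral_eq_Suc sum.atLeast_Suc_atMost add.assoc)
  also have "\<dots> = (fps_X * D) * ((1) * 1 + (- 15) * D ^ 1 + (15) * D ^ 2 + (16) * D ^ 3 + (- 2) * D ^ 4 + (- 14) * D ^ 5 + (- 8) * D ^ 6 + (- 7) * D ^ 7 + (14) * D ^ 8)" unfolding q by (simp only: mult.assoc)
  also have "\<dots> = (D - 1) * ((1) * 1 + (- 15) * D ^ 1 + (15) * D ^ 2 + (16) * D ^ 3 + (- 2) * D ^ 4 + (- 14) * D ^ 5 + (- 8) * D ^ 6 + (- 7) * D ^ 7 + (14) * D ^ 8)" unfolding XD ..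
  also have "\<dots> = (- 1) * 1 + (16) * D ^ 1 + (- 30) * D ^ 2 + (- 1) * D ^ 3 + (18) * D ^ 4 + (12) * D ^ 5 + (- 6) * D ^ 6 + (- 1) * D ^ 7 + (- 21) * D ^ 8 + (14) * D ^ 9" by algebra
  finally show ?thesis .
qed

lemma A6: "Af 6 = (8) * D ^ 2 + (- 13) * D ^ 3 + (- 12) * D ^ 4 + (6) * D ^ 5 + (15) * D ^ 6 + (31) * D ^ 7 + (- 49) * D ^ 8 + (56) * D ^ 9 + (- 84) * D ^ 10 + (42) * D ^ 11"
proof -
  have "Af 6 = Ef (6-1) + (if 2 \<le> (6::nat) then Ef (6-2) else 0) + fps_X * (\<Sum>u1\<in>{1..6}. Af u1 * Af (6-u1))"
    by (rule A_rec) simp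
  also have "\<dots> = (Ef 5 + Ef 4) + fps_X * ((Af 1 * Af 5 + Af 2 * Af 4 + Af 3 * Af 3 + Af 4 * Af 2 + Af 5 * Af 1) + Af 6)"
    by (simp add: numeral_eq_Suc sum.atLeast_Suc_atMost add.assoc Af0)
  finally have "Af 6 = D * (Ef 5 + Ef 4) + (D - 1) * (Af 1 * Af 5 + Af 2 * Af 4 + Af 3 * Af 3 + Af 4 * Af 2 + Af 5 * Af 1)" by (rule solve)
  thus ?thesis unfolding Ef0 E1 E2 E3 E4 E5 A1 A2 A3 A4 A5 by algebra
qed

lemma hs: "(\<Sum>i\<le>m. (i + k) choose k) = (m + k + 1) choose (k + 1)"
  by (induction m) simp_all

lemma Dpow_nth: "(D ^ Suc k) $ m = real ((m + k) choose k)"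
proof (induction k arbitrary: m)
  case 0 thus ?case by (simp add: D_def)
next
  case (Suc k)
  have "(D ^ Suc (Suc k)) $ m = (D ^ Suc k * D) $ m" by (subst power_Suc2) (rule refl)
  also have "\<dots> = (\<Sum>i=0..m. real ((i + k) choose k))" by (simp only: fps_mult_nth Suc.IH) (simp add: D_def)
  also have "\<dots> = real (\<Sum>i\<le>m. (i + k) choose k)" by (simp add: atLeast0AtMost)
  also have "\<dots> = real ((m + Suc k) choose Suc k)" unfolding hs by simp
  finally show ?case .
qed

lemma Dpow_nth': "1 \<le> k \<Longrightarrow> (D ^ k) $ m = real ((m + (k - 1)) choose (k - 1))"
  using Dpow_nth by (cases k) auto

lemma bin_rec: "real ((m + Suc k) choose Suc k) = real ((m+k) choose k) * (real m + real k + 1) / (real k + 1)"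
proof -
  have "real (Suc (m+k) * ((m+k) choose k)) = real ((Suc (m+k) choose Suc k) * Suc k)"
    using Suc_times_binomial_eq[of "m+k" k] by presburger
  hence "(real m + real k + 1) * real ((m+k) choose k) = real ((m + Suc k) choose Suc k) * (real k + 1)"
    by (simp add: algebra_simps)
  thus ?thesis by (simp add: field_simps)
qed

lemma bin_prod: "real ((m + k) choose k) = (\<Prod>i<k. (real m + real i + 1)) / fact k"
proof (induction k)
  case 0 thus ?case by simp
next
  case (Suc k)
  show ?case unfolding bin_rec Suc by (simp add: field_simps)
qed

lemma Dp1: "(D ^ 1) $ m = real ((m + 0) choose 0)" using Dpow_nth'[of 1 m] by simp

lemma Dp2: "(D ^ 2) $ m = real ((m + 1) choose 1)" using Dpow_nth'[of 2 m] by simp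

lemma Dp3: "(D ^ 3) $ m = real ((m + 2) choose 2)" using Dpow_nth'[of 3 m] by simp

lemma Dp4: "(D ^ 4) $ m = real ((m + 3) choose 3)" using Dpow_nth'[of 4 m] by simp

lemma Dp5: "(D ^ 5) $ m = real ((m + 4) choose 4)" using Dpow_nth'[of 5 m] by simp

lemma Dp6: "(D ^ 6) $ m = real ((m + 5) choose 5)" using Dpow_nth'[of 6 m] by simp

lemma Dp7: "(D ^ 7) $ m = real ((m + 6) choose 6)" using Dpow_nth'[of 7 m] by simp

lemma Dp8: "(D ^ 8) $ m = real ((m + 7) choose 7)" using Dpow_nth'[of 8 m] by simp

lemma Dp9: "(D ^ 9) $ m = real ((m + 8) choose 8)" using Dpow_nth'[of 9 m] by simp

lemma Dp10: "(D ^ 10) $ m = real ((m + 9) choose 9)" using Dpow_nth'[of 10 m] by simp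

lemma Dp11: "(D ^ 11) $ m = real ((m + 10) choose 10)" using Dpow_nth'[of 11 m] by simp

lemma s3: "real (s 3 m) = (-1) * real ((m + 1) choose 1) + (-1) * real ((m + 3) choose 3) + (2) * real ((m + 4) choose 4)"
proof -
  have "real (s 3 m) = Af 3 $ m" by (simp add: Af_def)
  also have "\<dots> = (-1) * real ((m + 1) choose 1) + (-1) * real ((m + 3) choose 3) + (2) * real ((m + 4) choose 4)" unfolding A3 by (simp add: fps_numeral_fps_const Dp2 Dp4 Dp5)
  finally show ?thesis .
qed

lemma s4: "real (s 4 m) = (2) * real ((m + 1) choose 1) + (-3) * real ((m + 3) choose 3) + (1) * real ((m + 4) choose 4) + (-5) * real ((m + 5) choose 5) + (5) * real ((m + 6) choose 6)"
proof -
  have "real (s 4 m) = Af 4 $ m" by (simp add: Af_def)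
  also have "\<dots> = (2) * real ((m + 1) choose 1) + (-3) * real ((m + 3) choose 3) + (1) * real ((m + 4) choose 4) + (-5) * real ((m + 5) choose 5) + (5) * real ((m + 6) choose 6)" unfolding A4 by (simp add: fps_numeral_fps_const Dp5 Dp2 Dp4 Dp6 Dp7)
  finally show ?thesis .
qed

lemma s5: "real (s 5 m) = (-4) * real ((m + 1) choose 1) + (3) * real ((m + 2) choose 2) + (6) * real ((m + 3) choose 3) + (4) * real ((m + 4) choose 4) + (-11) * real ((m + 5) choose 5) + (9) * real ((m + 6) choose 6) + (-21) * real ((m + 7) choose 7) + (14) * real ((m + 8) choose 8)"
proof -
  have "real (s 5 m) = Af 5 $ m" by (simp add: Af_def)
  also have "\<dots> = (-4) * real ((m + 1) choose 1) + (3) * real ((m + 2) choose 2) + (6) * real ((m + 3) choose 3) + (4) * real ((m + 4) choose 4) + (-11) * real ((m + 5) choose 5) + (9) * real ((m + 6) choose 6) + (-21) * real ((m + 7) choose 7) + (14) * real ((m + 8) choose 8)" unfolding A5 by (simp add: fps_numeral_fps_const Dp4 Dp6 Dp3 Dp5 Dp2 Dp8 Dp7 Dp9)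
  finally show ?thesis .
qed

lemma s6: "real (s 6 m) = (8) * real ((m + 1) choose 1) + (-13) * real ((m + 2) choose 2) + (-12) * real ((m + 3) choose 3) + (6) * real ((m + 4) choose 4) + (15) * real ((m + 5) choose 5) + (31) * real ((m + 6) choose 6) + (-49) * real ((m + 7) choose 7) + (56) * real ((m + 8) choose 8) + (-84) * real ((m + 9) choose 9) + (42) * real ((m + 10) choose 10)"
proof -
  have "real (s 6 m) = Af 6 $ m" by (simp add: Af_def)
  also have "\<dots> = (8) * real ((m + 1) choose 1) + (-13) * real ((m + 2) choose 2) + (-12) * real ((m + 3) choose 3) + (6) * real ((m + 4) choose 4) + (15) * real ((m + 5) choose 5) + (31) * real ((m + 6) choose 6) + (-49) * real ((m + 7) choose 7) + (56) * real ((m + 8) choose 8) + (-84) * real ((m + 9) choose 9) + (42) * real ((m + 10) choose 10)" unfolding A6 by (simp add: fps_numeral_fps_const Dp5 Dp7 Dp4 Dp6 Dp3 Dp9 Dp2 Dp8 Dp10 Dp11)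
  finally show ?thesis .
qed

lemma f3: "real (s 3 m) = (2*real m + 3 - 1) * (2*real m + 3 - 3) / 192 * ((2*real m + 3)^2 + 8*(2*real m + 3) + 31)"
  unfolding s3 bin_prod
  by (simp add: numeral_eq_Suc prod.lessThan_Suc) (simp add: field_simps)

lemma f4: "real (s 4 m) = (2*real m + 4 - 2) * (2*real m + 4 - 4) / 9216 *
                 ((2*real m + 4)^4 + 12 * (2*real m + 4)^3 + 68 * (2*real m + 4)^2 - 288 * (2*real m + 4) - 2304)"
  unfolding s4 bin_prod
  by (simp add: numeral_eq_Suc prod.lessThan_Suc) (simp add: field_simps)

lemma f5: "real (s 5 m) = (2*real m + 5 - 3) * (2*real m + 5 - 5) * (2*real m + 5 - 7) / 737280 *
                 ((2*real m + 5)^5 + 23 * (2*real m + 5)^4 + 278 * (2*real m + 5)^3 + 634 * (2*real m + 5)^2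
                  - 9879 * (2*real m + 5) - 52497)"
  unfolding s5 bin_prod
  by (simp add: numeral_eq_Suc prod.lessThan_Suc) (simp add: field_simps)

lemma f6: "real (s 6 m) = (2*real m + 6 - 4) * (2*real m + 6 - 6) * (2*real m + 6 - 8) / 88473600 *
                 ((2*real m + 6)^7 + 28 * (2*real m + 6)^6 + 400 * (2*real m + 6)^5 - 560 * (2*real m + 6)^4
                  - 56336 * (2*real m + 6)^3 - 320768 * (2*real m + 6)^2 + 1555200 * (2*real m + 6) + 13363200)"
  unfolding s6 bin_prod
  by (simp add: numeral_eq_Suc prod.lessThan_Suc) (simp add: field_simps)

lemma LO_s: assumes "k \<le> (n-1) div 2"
  shows "LO k n = s (n - 2*((n-1) div 2 - k)) ((n-1) div 2 - k)"
proof -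
  define m where "m = (n-1) div 2 - k"
  define u where "u = n - 2*m"
  have hi: "1 + u + 2*m = Suc n" unfolding u_def m_def by auto
  have "{A. saturated2 n A \<and> card A + k = (n - 1) div 2} = FF False 1 u m"
    unfolding FF_def saturated2_sat hi using assms unfolding m_def by auto
  hence "LO k n = card (FF False 1 u m)" unfolding LO_def by simp
  also have "\<dots> = s u m" unfolding s_def by (rule indep)
  finally show ?thesis unfolding u_def m_def .
qed

lemma LO_zero: assumes "(n-1) div 2 < k" shows "LO k n = 0"
proof -
  have "{A. saturated2 n A \<and> card A + k = (n - 1) div 2} = {}" using assms by auto
  thus ?thesis unfolding LO_def by (simp only: card.empty)
qed

theorem corollary5:
  fixes n :: nat
  assumes "n \<ge> 3"
  shows "real (LO 1 n) =
           (if odd n then (real n - 1) * (real n - 3) / 192 * ((real n)^2 + 8 * real n + 31)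
            else (real n - 2) * (real n - 4) / 9216 *
                 ((real n)^4 + 12 * (real n)^3 + 68 * (real n)^2 - 288 * real n - 2304))
       \<and> real (LO 2 n) =
           (if odd n then (real n - 3) * (real n - 5) * (real n - 7) / 737280 *
                 ((real n)^5 + 23 * (real n)^4 + 278 * (real n)^3 + 634 * (real n)^2
                  - 9879 * real n - 52497)
            else (real n - 4) * (real n - 6) * (real n - 8) / 88473600 *
                 ((real n)^7 + 28 * (real n)^6 + 400 * (real n)^5 - 560 * (real n)^4
                  - 56336 * (real n)^3 - 320768 * (real n)^2 + 1555200 * real n + 13363200))"
proof (cases "odd n")
  case True
  then obtain j where nj: "n = 2*j + 1" using oddE by blast
  have j1: "1 \<le> j" using assms nj by auto
  have dv: "(n-1) div 2 = j" using nj by auto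
  have ar1: "n - 2*(j-1) = 3" using nj j1 by auto
  have L1: "LO 1 n = s 3 (j-1)" using LO_s[of 1 n] dv j1 ar1 by auto
  have rn1: "real n = 2 * real (j-1) + 3" using nj j1 by (simp add: of_nat_diff)
  have P1: "real (LO 1 n) = (real n - 1) * (real n - 3) / 192 * ((real n)^2 + 8 * real n + 31)"
    unfolding L1 rn1 by (rule f3)
  have P2: "real (LO 2 n) = (real n - 3) * (real n - 5) * (real n - 7) / 737280 *
                 ((real n)^5 + 23 * (real n)^4 + 278 * (real n)^3 + 634 * (real n)^2
                  - 9879 * real n - 52497)"
  proof (cases "j = 1")
    case True
    have "LO 2 n = 0" using LO_zero[of n 2] dv True by auto
    moreover have "real n = 3" using nj True by simp
    ultimately show ?thesis by simp
  next
    case False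
    have ar2: "n - 2*(j-2) = 5" using nj j1 False by auto
    have L2: "LO 2 n = s 5 (j-2)" using LO_s[of 2 n] dv j1 False ar2 by auto
    have rn2: "real n = 2 * real (j-2) + 5" using nj j1 False by (simp add: of_nat_diff)
    show ?thesis unfolding L2 rn2 by (rule f5)
  qed
  show ?thesis using True P1 P2 by simp
next
  case False
  then obtain i where ni: "n = 2*i" by (auto elim: evenE)
  define j where "j = i - 1"
  have nj: "n = 2*j + 2" using ni assms unfolding j_def by auto
  have j1: "1 \<le> j" using assms nj by auto
  have dv: "(n-1) div 2 = j" using nj by auto
  have ar1: "n - 2*(j-1) = 4" using nj j1 by auto
  have L1: "LO 1 n = s 4 (j-1)" using LO_s[of 1 n] dv j1 ar1 by auto
  have rn1: "real n = 2 * real (j-1) + 4" using nj j1 by (simp add: of_nat_diff)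
  have P1: "real (LO 1 n) = (real n - 2) * (real n - 4) / 9216 *
                 ((real n)^4 + 12 * (real n)^3 + 68 * (real n)^2 - 288 * real n - 2304)"
    unfolding L1 rn1 by (rule f4)
  have P2: "real (LO 2 n) = (real n - 4) * (real n - 6) * (real n - 8) / 88473600 *
                 ((real n)^7 + 28 * (real n)^6 + 400 * (real n)^5 - 560 * (real n)^4
                  - 56336 * (real n)^3 - 320768 * (real n)^2 + 1555200 * real n + 13363200)"
  proof (cases "j = 1")
    case True
    have "LO 2 n = 0" using LO_zero[of n 2] dv True by auto
    moreover have "real n = 4" using nj True by simp
    ultimately show ?thesis by simp
  next
    case False
    have ar2: "n - 2*(j-2) = 6" using nj j1 False by auto
    have L2: "LO 2 n = s 6 (j-2)" using LO_s[of 2 n] dv j1 False ar2 by auto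
    have rn2: "real n = 2 * real (j-2) + 6" using nj j1 False by (simp add: of_nat_diff)
    show ?thesis unfolding L2 rn2 by (rule f6)
  qed
  show ?thesis using False P1 P2 by simp
qed

end
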